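(* For every $\beta>1$ there is a constant $C(\beta)$ such that for all integers $j\ge1$, $$\sum_{l\ge1}\frac{1}{(1+|j-l|)(1+\ln l)^\beta}\le C(\beta).$$ *)

theory Defs
  imports Complex_Main
begin

end

theory Submission imports Defs "HOL-Analysis.Analysis" begin
lemma ln_step: "n \<ge> 1 \<Longrightarrow> 1/(real n + 1) \<le> ln (real n + 1) - ln (real n)"
proof -
  assume n: "n \<ge> 1"
  have "ln (real n / (real n + 1)) \<le> real n / (real n + 1) - 1"
    by (rule ln_le_minus_one) (use n in simp)
  also have "real n / (real n + 1) - 1 = - (1/(real n + 1))" by (simp add: field_simps)
  finally show ?thesis using n by (simp add: ln_div)
qed

lemma harm_bound: "n \<ge> 1 \<Longrightarrow> (\<Sum>k\<in>{1..n}. 1 / real k) \<le> 1 + ln (real n)"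
proof (induction n rule: dec_induct)
  case base then show ?case by simp
next
  case (step n)
  have "(\<Sum>k\<in>{1..Suc n}. 1 / real k) = (\<Sum>k\<in>{1..n}. 1 / real k) + 1/(real n + 1)"
    by (simp add: add.commute)
  also have "\<dots> \<le> 1 + ln (real n) + (ln (real n + 1) - ln (real n))"
    using step ln_step[of n] by linarith
  finally show ?case by (simp add: add.commute)
qed

lemma cond_summable:
  assumes "\<beta> > 1"
  shows "summable (\<lambda>n::nat. 1 / (real n * (1 + ln (real n)) powr \<beta>))" (is "summable ?h")
proof (subst condensation_test)
  fix m :: nat assume m: "0 < m"
  have "real m * (1 + ln (real m)) powr \<beta> \<le> real (Suc m) * (1 + ln (real (Suc m))) powr \<beta>"
    using m assms by (intro mult_mono powr_mono2) auto
  moreover have "0 \<le> ln (real m)" using m by simp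
  then have "0 < 1 + ln (real m)" by simp
  then have "0 < real m * (1 + ln (real m)) powr \<beta>" using m by simp
  ultimately show "?h (Suc m) \<le> ?h m"
    by (intro divide_left_mono) auto
next
  fix n show "0 \<le> ?h n" by auto
next
  show "summable (\<lambda>n. 2 ^ n * ?h (2 ^ n))"
  proof (rule summable_comparison_test')
    show "summable (\<lambda>n::nat. ln 2 powr (-\<beta>) * real n powr (-\<beta>))"
      using assms by (intro summable_mult) (simp add: summable_real_powr_iff)
  next
    fix n :: nat assume n: "1 \<le> n"
    have e: "2 ^ n * ?h (2 ^ n) = 1 / (1 + real n * ln 2) powr \<beta>"
      by (simp add: ln_realpow)
    have "(ln 2 * real n) powr \<beta> \<le> (1 + real n * ln 2) powr \<beta>"
      using assms by (intro powr_mono2) auto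
    moreover have "0 < (ln 2 * real n) powr \<beta>" using n by simp
    moreover have "0 < 1 + real n * ln 2" by (simp add: add_pos_nonneg)
    then have "0 < (1 + real n * ln 2) powr \<beta>" by simp
    ultimately have "1 / (1 + real n * ln 2) powr \<beta> \<le> 1 / (ln 2 * real n) powr \<beta>"
      by (intro divide_left_mono mult_pos_pos) auto
    also have "\<dots> = ln 2 powr (-\<beta>) * real n powr (-\<beta>)"
      by (simp add: powr_mult powr_minus divide_inverse)
    finally show "norm (2 ^ n * ?h (2 ^ n)) \<le> ln 2 powr (-\<beta>) * real n powr (-\<beta>)"
      using e by (simp add: abs_mult)
  qed
qed

lemma mid_bound:
  fixes j :: nat
  shows "(\<Sum>l\<in>{1..2*j}. 1 / (1 + \<bar>real j - real l\<bar>)) \<le> 2 * (\<Sum>k\<in>{1..j}. 1 / real k)"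
proof -
  have U: "{1..2*j} = {1..j} \<union> {Suc j..2*j}" by auto
  have "(\<Sum>l\<in>{1..2*j}. 1 / (1 + \<bar>real j - real l\<bar>))
      = (\<Sum>l\<in>{1..j}. 1 / (1 + \<bar>real j - real l\<bar>)) + (\<Sum>l\<in>{Suc j..2*j}. 1 / (1 + \<bar>real j - real l\<bar>))"
    unfolding U by (rule sum.union_disjoint) auto
  moreover have "(\<Sum>l\<in>{1..j}. 1 / (1 + \<bar>real j - real l\<bar>)) = (\<Sum>k\<in>{1..j}. 1 / real k)"
  proof (rule sum.reindex_bij_witness[where i = "\<lambda>k. Suc j - k" and j = "\<lambda>l. Suc j - l"])
    fix l assume "l \<in> {1..j}"
    then show "1 / real (Suc j - l) = 1 / (1 + \<bar>real j - real l\<bar>)" by (simp add: of_nat_diff)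
  qed auto
  moreover have "(\<Sum>l\<in>{Suc j..2*j}. 1 / (1 + \<bar>real j - real l\<bar>)) \<le> (\<Sum>l\<in>{Suc j..2*j}. 1 / real (l - j))"
  proof (rule sum_mono)
    fix l assume "l \<in> {Suc j..2*j}"
    then have "real (l - j) \<le> 1 + \<bar>real j - real l\<bar>" "0 < real (l - j)" by (auto simp: of_nat_diff)
    then show "1 / (1 + \<bar>real j - real l\<bar>) \<le> 1 / real (l - j)"
      by (intro divide_left_mono mult_pos_pos) auto
  qed
  moreover have "(\<Sum>l\<in>{Suc j..2*j}. 1 / real (l - j)) = (\<Sum>k\<in>{1..j}. 1 / real k)"
    by (rule sum.reindex_bij_witness[where i = "\<lambda>k. k + j" and j = "\<lambda>l. l - j"]) auto
  ultimately show ?thesis by linarith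
qed

lemma main_bound:
  fixes \<beta> :: real and j M :: nat
  assumes b: "\<beta> > 1" and j: "j \<ge> 1"
  defines "F \<equiv> \<lambda>l::nat. 1 / ((1 + \<bar>real j - real l\<bar>) * (1 + ln (real l)) powr \<beta>)"
  shows "(\<Sum>l\<in>{1..M}. F l) \<le> 1 + 2 / (1 - ln 2) powr \<beta>
           + 2 * suminf (\<lambda>n::nat. 1 / (real n * (1 + ln (real n)) powr \<beta>))"
proof -
  define h where "h = (\<lambda>n::nat. 1 / (real n * (1 + ln (real n)) powr \<beta>))"
  define K where "K = 1 / (1 - ln 2) powr \<beta>"
  define A where "A = {l\<in>{1..M}. 2*l \<le> j}"
  define B where "B = {l\<in>{1..M}. j < 2*l \<and> l < 2*j}"
  define D where "D = {l\<in>{1..M}. 2*j \<le> l}"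
  have L1: "1 \<le> (1 + ln (real l)) powr \<beta>" if "l \<ge> 1" for l :: nat
    using that b by (intro ge_one_powr_ge_zero) auto
  have Fnn: "0 \<le> F l" for l unfolding F_def by auto
  have split: "{1..M} = A \<union> B \<union> D" unfolding A_def B_def D_def by auto
  have "(\<Sum>l\<in>{1..M}. F l) = sum F A + sum F B + sum F D"
  proof -
    have "sum F (A \<union> B \<union> D) = sum F (A \<union> B) + sum F D"
      by (rule sum.union_disjoint) (auto simp: A_def B_def D_def)
    moreover have "sum F (A \<union> B) = sum F A + sum F B"
      by (rule sum.union_disjoint) (auto simp: A_def B_def D_def)
    ultimately show ?thesis unfolding split by simp
  qed
  moreover have "sum F A \<le> 1"
  proof -
    have "sum F A \<le> sum (\<lambda>_. 2 / real j) A"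
    proof (rule sum_mono)
      fix l assume l: "l \<in> A"
      then have l1: "l \<ge> 1" and l2: "2 * real l \<le> real j" unfolding A_def by auto
      have X1: "real j / 2 \<le> 1 + \<bar>real j - real l\<bar>" using l2 by simp
      have "(1 + \<bar>real j - real l\<bar>) \<le> (1 + \<bar>real j - real l\<bar>) * (1 + ln (real l)) powr \<beta>"
        using mult_left_mono[OF L1[OF l1], of "1 + \<bar>real j - real l\<bar>"] by simp
      then have X: "real j / 2 \<le> (1 + \<bar>real j - real l\<bar>) * (1 + ln (real l)) powr \<beta>"
        using X1 by linarith
      have "1 / ((1 + \<bar>real j - real l\<bar>) * (1 + ln (real l)) powr \<beta>) \<le> 1 / (real j / 2)"
        using X j by (intro divide_left_mono) auto
      then show "F l \<le> 2 / real j" unfolding F_def by simp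
    qed
    also have "\<dots> = real (card A) * (2 / real j)" by simp
    also have "\<dots> \<le> 1"
    proof -
      have "A \<subseteq> {1..j div 2}" unfolding A_def by auto
      then have "card A \<le> j div 2" by (metis card_atLeastAtMost card_mono finite_atLeastAtMost diff_Suc_1 le_trans order_refl)
      then have "2 * real (card A) \<le> real j" by linarith
      then show ?thesis using j by (simp add: field_simps)
    qed
    finally show ?thesis .
  qed
  moreover have "sum F D \<le> 2 * suminf h"
  proof -
    have "sum F D \<le> sum (\<lambda>l. 2 * h l) D"
    proof (rule sum_mono)
      fix l assume l: "l \<in> D"
      then have l1: "l \<ge> 1" and l2: "2 * real j \<le> real l" unfolding D_def by auto
      have P: "0 < (1 + ln (real l)) powr \<beta>" using L1[OF l1] by linarith
      have "real l / 2 * (1 + ln (real l)) powr \<beta> \<le> (1 + \<bar>real j - real l\<bar>) * (1 + ln (real l)) powr \<beta>"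
        using P l2 by (intro mult_right_mono) auto
      moreover have "0 < real l / 2 * (1 + ln (real l)) powr \<beta>" using P l1 by simp
      ultimately have "F l \<le> 1 / (real l / 2 * (1 + ln (real l)) powr \<beta>)"
        unfolding F_def using l1 by (intro divide_left_mono mult_pos_pos) auto
      also have "\<dots> = 2 * h l" unfolding h_def by simp
      finally show "F l \<le> 2 * h l" .
    qed
    also have "\<dots> = 2 * sum h D" by (simp add: sum_distrib_left)
    also have "sum h D \<le> suminf h"
      by (rule sum_le_suminf) (auto simp: h_def D_def cond_summable[OF b])
    finally show ?thesis by simp
  qed
  moreover have "sum F B \<le> 2 * K"
  proof -
    have lj: "0 \<le> ln (real j)" using j by simp
    have PJ: "1 \<le> (1 + ln (real j)) powr \<beta>" using lj b by (intro ge_one_powr_ge_zero) auto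
    have l2: "0 < 1 - ln (2::real)" using ln_2_less_1 by simp
    have "sum F B \<le> sum (\<lambda>l. K / (1 + ln (real j)) powr \<beta> * (1 / (1 + \<bar>real j - real l\<bar>))) B"
    proof (rule sum_mono)
      fix l assume l: "l \<in> B"
      then have l1: "l \<ge> 1" and lb: "real j < 2 * real l" unfolding B_def by auto
      have "ln (real j) - ln 2 \<le> ln (real l)"
      proof -
        have "ln (real j / 2) \<le> ln (real l)" using lb j by (subst ln_le_cancel_iff) auto
        then show ?thesis using j by (simp add: ln_div)
      qed
      then have "(1 - ln 2) * (1 + ln (real j)) \<le> 1 + ln (real l)"
      proof -
        have "0 \<le> ln (real j) * ln 2" using lj by simp
        then show ?thesis using \<open>ln (real j) - ln 2 \<le> ln (real l)\<close> by (simp add: algebra_simps)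
      qed
      then have "((1 - ln 2) * (1 + ln (real j))) powr \<beta> \<le> (1 + ln (real l)) powr \<beta>"
        using l2 lj b by (intro powr_mono2) auto
      then have Q: "(1 - ln 2) powr \<beta> * (1 + ln (real j)) powr \<beta> \<le> (1 + ln (real l)) powr \<beta>"
        using l2 lj by (simp add: powr_mult)
      have p1: "0 < (1 - ln 2) powr \<beta>" using l2 by simp
      have p3: "0 < 1 + \<bar>real j - real l\<bar>" by simp
      have "(1 + \<bar>real j - real l\<bar>) * ((1 - ln 2) powr \<beta> * (1 + ln (real j)) powr \<beta>)
          \<le> (1 + \<bar>real j - real l\<bar>) * (1 + ln (real l)) powr \<beta>"
        using Q p3 by (intro mult_left_mono) auto
      moreover have "0 < (1 + \<bar>real j - real l\<bar>) * ((1 - ln 2) powr \<beta> * (1 + ln (real j)) powr \<beta>)"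
        using p1 p3 PJ by (intro mult_pos_pos) auto
      ultimately have "F l \<le> 1 / ((1 + \<bar>real j - real l\<bar>) * ((1 - ln 2) powr \<beta> * (1 + ln (real j)) powr \<beta>))"
        unfolding F_def by (intro divide_left_mono) auto
      then show "F l \<le> K / (1 + ln (real j)) powr \<beta> * (1 / (1 + \<bar>real j - real l\<bar>))"
        by (simp add: K_def field_simps)
    qed
    also have "\<dots> = K / (1 + ln (real j)) powr \<beta> * (\<Sum>l\<in>B. 1 / (1 + \<bar>real j - real l\<bar>))"
      by (simp add: sum_distrib_left)
    also have "(\<Sum>l\<in>B. 1 / (1 + \<bar>real j - real l\<bar>)) \<le> 2 * (1 + ln (real j))"
    proof -
      have "(\<Sum>l\<in>B. 1 / (1 + \<bar>real j - real l\<bar>)) \<le> (\<Sum>l\<in>{1..2*j}. 1 / (1 + \<bar>real j - real l\<bar>))"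
        by (rule sum_mono2) (auto simp: B_def)
      also have "\<dots> \<le> 2 * (\<Sum>k\<in>{1..j}. 1 / real k)" by (rule mid_bound)
      also have "\<dots> \<le> 2 * (1 + ln (real j))" using harm_bound[OF j] by simp
      finally show ?thesis .
    qed
    then have "K / (1 + ln (real j)) powr \<beta> * (\<Sum>l\<in>B. 1 / (1 + \<bar>real j - real l\<bar>))
        \<le> K / (1 + ln (real j)) powr \<beta> * (2 * (1 + ln (real j)))"
      using l2 PJ by (intro mult_left_mono) (auto simp: K_def)
    also have "\<dots> \<le> 2 * K"
    proof -
      have "(1 + ln (real j)) powr 1 \<le> (1 + ln (real j)) powr \<beta>"
        using b lj by (intro powr_mono) auto
      then have "1 + ln (real j) \<le> (1 + ln (real j)) powr \<beta>" using lj by simp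
      then have r: "(1 + ln (real j)) / (1 + ln (real j)) powr \<beta> \<le> 1" using PJ by (subst divide_le_eq_1) auto
      have K0: "0 \<le> K" using l2 by (simp add: K_def)
      have "K / (1 + ln (real j)) powr \<beta> * (2 * (1 + ln (real j)))
          = (2 * K) * ((1 + ln (real j)) / (1 + ln (real j)) powr \<beta>)" by simp
      also have "\<dots> \<le> (2 * K) * 1" using r K0 by (intro mult_left_mono) auto
      finally show ?thesis by simp
    qed
    finally show ?thesis .
  qed
  ultimately show ?thesis unfolding h_def K_def by linarith
qed

theorem lemma7p1:
  fixes \<beta> :: real
  assumes "\<beta> > 1"
  shows "\<exists>C::real. \<forall>j::nat. j \<ge> 1 \<longrightarrow>
           summable (\<lambda>n::nat. let l = Suc n in
              1 / ((1 + \<bar>real j - real l\<bar>) * (1 + ln (real l)) powr \<beta>))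
         \<and> (\<Sum>n. let l = Suc n in
              1 / ((1 + \<bar>real j - real l\<bar>) * (1 + ln (real l)) powr \<beta>)) \<le> C"
proof (intro exI allI impI)
  fix j :: nat assume j: "j \<ge> 1"
  define C where "C = 1 + 2 / (1 - ln 2) powr \<beta>
           + 2 * suminf (\<lambda>n::nat. 1 / (real n * (1 + ln (real n)) powr \<beta>))"
  define F where "F = (\<lambda>l::nat. 1 / ((1 + \<bar>real j - real l\<bar>) * (1 + ln (real l)) powr \<beta>))"
  have eq: "(\<lambda>n::nat. let l = Suc n in
              1 / ((1 + \<bar>real j - real l\<bar>) * (1 + ln (real l)) powr \<beta>)) = (\<lambda>n. F (Suc n))"
    by (simp add: F_def Let_def)
  have ps: "(\<Sum>n<M. F (Suc n)) \<le> C" for M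
  proof -
    have "(\<Sum>n<M. F (Suc n)) = (\<Sum>l\<in>{1..M}. F l)"
      by (induction M) auto
    also have "\<dots> \<le> C" unfolding F_def C_def by (rule main_bound[OF assms j])
    finally show ?thesis .
  qed
  have nn: "0 \<le> F n" for n by (simp add: F_def)
  have sm: "summable (\<lambda>n. F (Suc n))"
    by (rule summableI_nonneg_bounded[where x = C]) (use nn ps in auto)
  show "summable (\<lambda>n::nat. let l = Suc n in
              1 / ((1 + \<bar>real j - real l\<bar>) * (1 + ln (real l)) powr \<beta>))
         \<and> (\<Sum>n. let l = Suc n in
              1 / ((1 + \<bar>real j - real l\<bar>) * (1 + ln (real l)) powr \<beta>)) \<le> C"
    unfolding eq using sm suminf_le_const[OF sm ps] by simp
qed

end
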